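(* Let $f_0(z)=10\cosh(z)-12$. Then the holomorphic map $f_0\colon 2\mathbb{D}\to f_0(2\mathbb{D})$ is proper of degree $2$, and $D(-2,4)\subset f_0(\mathbb{D})\subset D(-2,7)$ and $D(-2,9)\subset f_0(2\mathbb{D})$.
   Context: $\mathbb{D}$ is the open unit disk, $2\mathbb{D}$ the open disk of radius $2$ centered at $0$, and $D(c,r)$ the open disk of center $c$ and radius $r$. *)

theory Defs
  imports "HOL-Complex_Analysis.Complex_Analysis"
begin

definition f0 :: "complex \<Rightarrow> complex" where
  "f0 z = 10 * cosh z - 12"

definition map_degree_on :: "(complex \<Rightarrow> complex) \<Rightarrow> complex set \<Rightarrow> nat \<Rightarrow> bool" where
  "map_degree_on f S d \<longleftrightarrow>
     (\<forall>w \<in> f ` S. finite {z \<in> S. f z = w} \<and>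
        (\<Sum>z \<in> {z \<in> S. f z = w}. zorder (\<lambda>\<xi>. f \<xi> - w) z) = int d)"

end

theory Submission
  imports Defs
begin


lemma sinh_ge_self: "0 \<le> t \<Longrightarrow> t \<le> sinh (t::real)"
proof -
  assume t: "0 \<le> t"
  have "(\<lambda>x. sinh x - x) 0 \<le> (\<lambda>x. sinh x - x) t"
    by (rule DERIV_nonneg_imp_nondecreasing[OF t])
       (auto intro!: derivative_eq_intros exI simp: cosh_real_ge_1)
  thus ?thesis by simp
qed

lemma sinh_le_t_cosh: "0 \<le> t \<Longrightarrow> sinh t \<le> t * cosh (t::real)"
proof -
  assume t: "0 \<le> t"
  have "(\<lambda>x. x * cosh x - sinh x) 0 \<le> (\<lambda>x. x * cosh x - sinh x) t"
    by (rule DERIV_nonneg_imp_nondecreasing[OF t])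
       (auto intro!: derivative_eq_intros exI simp: sinh_real_nonneg_iff)
  thus ?thesis by simp
qed

lemma cosh_half: "cosh (x::real) = 1 + 2 * sinh (x/2)^2"
  using cosh_double[of "x/2"] cosh_square_eq[of "x/2"] by simp

lemma cosh_lower: "1 + x^2/2 \<le> cosh (x::real)"
proof -
  have "\<bar>x\<bar>/2 \<le> sinh (\<bar>x\<bar>/2)" by (rule sinh_ge_self) simp
  hence "(\<bar>x\<bar>/2)^2 \<le> sinh (\<bar>x\<bar>/2)^2" by (rule power_mono) simp
  moreover have "cosh x = cosh \<bar>x\<bar>" by simp
  ultimately show ?thesis using cosh_half[of "\<bar>x\<bar>"] by (simp add: power2_eq_square)
qed

lemma cosh_upper: assumes "x^2 \<le> (1::real)" shows "cosh x \<le> 1 + 2/3 * x^2"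
proof -
  define t where "t = \<bar>x\<bar>/2"
  have t0: "0 \<le> t" by (simp add: t_def)
  have "sinh t \<le> t * cosh t" by (rule sinh_le_t_cosh[OF t0])
  moreover have "0 \<le> sinh t" using t0 by (simp add: sinh_real_nonneg_iff)
  ultimately have "sinh t ^2 \<le> (t * cosh t)^2" by (rule power_mono)
  also have "\<dots> = t^2 * (1 + sinh t ^2)" using cosh_square_eq[of t] by (simp add: power_mult_distrib)
  finally have s: "sinh t^2 \<le> t^2 * (1 + sinh t ^2)" .
  have t2: "t^2 = x^2/4" by (simp add: t_def power_divide)
  have c: "cosh x = 1 + 2 * sinh t ^2" using cosh_half[of "\<bar>x\<bar>"] by (simp add: t_def)
  have m: "sinh t^2 * (1 - t^2) \<le> t^2" using s by (simp add: algebra_simps)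
  have q: "t^2 \<le> 1/4" using t2 assms by simp
  have "sinh t^2 * (3/4) \<le> sinh t^2 * (1 - t^2)"
    by (rule mult_left_mono) (use q in linarith, simp)
  hence "sinh t^2 * (3/4) \<le> t^2" using m by linarith
  thus ?thesis using c t2 by linarith
qed



lemma cos_lower: "1 - y^2/2 \<le> cos (y::real)"
proof -
  have "cos y = 1 - 2 * sin (y/2)^2" using cos_double_sin[of "y/2"] by simp
  moreover have "sin (y/2)^2 \<le> (y/2)^2"
    using abs_sin_x_le_abs_x[of "y/2"] by (metis abs_ge_zero power2_abs power_mono)
  ultimately show ?thesis by (simp add: power_divide)
qed



lemma cos_upper: assumes "y^2 \<le> (4::real)" shows "cos y \<le> 1 - y^2/2 + y^4/24"
proof -
  define s where "s = \<bar>y\<bar>/2"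
  have s0: "0 \<le> s" by (simp add: s_def)
  have "\<bar>y\<bar> \<le> 2" using assms power2_le_iff_abs_le[of 2 y] by simp
  hence s1: "s \<le> 1" by (simp add: s_def)
  have "\<bar>sin s - (\<Sum>m<3. sin_coeff m * s ^ m)\<bar> \<le> inverse (fact 3) * \<bar>s\<bar> ^ 3"
    by (rule Maclaurin_sin_bound)
  hence "\<bar>sin s - s\<bar> \<le> s^3/6" using s0 by (simp add: eval_nat_numeral sin_coeff_def fact_numeral)
  hence ls: "s - s^3/6 \<le> sin s" by linarith
  have "s^3 \<le> s^1" using s0 s1 by (intro power_decreasing) auto
  hence "0 \<le> s - s^3/6" using s0 by simp
  hence "(s - s^3/6)^2 \<le> sin s ^2" by (rule power_mono[OF ls])
  moreover have "(s - s^3/6)^2 = s^2 - s^4/3 + s^6/36" by (simp add: power2_diff power_mult_distrib field_simps eval_nat_numeral)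
  moreover have "0 \<le> s^6" by simp
  ultimately have A: "s^2 - s^4/3 \<le> sin s ^2" by linarith
  have "cos y = cos (2 * s)" by (cases "y < 0") (simp_all add: s_def)
  hence B: "cos y = 1 - 2 * sin s ^2"
    using cos_double_sin[of "s"] by simp
  have C: "y^2 = 4 * s^2" "y^4 = 16 * s^4" by (simp_all add: s_def power_divide)
  show ?thesis unfolding B C using A by linarith
qed

lemma cosh_complex_Re: "Re (cosh z) = cosh (Re z) * cos (Im z)"
  by (simp add: cosh_field_def Re_exp cosh_def field_simps)
lemma cosh_complex_Im: "Im (cosh z) = sinh (Re z) * sin (Im z)"
  by (simp add: cosh_field_def Im_exp sinh_def field_simps)

lemma norm_cosh_minus_1: "norm (cosh z - 1) = cosh (Re z) - cos (Im z)"
proof -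
  let ?x = "Re z" and ?y = "Im z"
  have "(norm (cosh z - 1))^2 = (cosh ?x * cos ?y - 1)^2 + (sinh ?x * sin ?y)^2"
    by (simp add: cmod_power2 cosh_complex_Re cosh_complex_Im)
  also have "\<dots> = (cosh ?x - cos ?y)^2"
    using sinh_square_eq[of ?x] sin_squared_eq[of ?y]
    by (simp add: power_mult_distrib power2_diff) (simp add: algebra_simps power2_eq_square)
  finally have "(norm (cosh z - 1))^2 = (cosh ?x - cos ?y)^2" .
  moreover have "0 \<le> cosh ?x - cos ?y" using cosh_real_ge_1[of ?x] cos_le_one[of ?y] by linarith
  ultimately show ?thesis by (metis norm_ge_zero power2_eq_imp_eq)
qed



lemma int_small: assumes "\<bar>real_of_int (2*n) * pi\<bar> \<le> 4" shows "n = 0"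
proof (rule ccontr)
  assume "n \<noteq> 0"
  hence "1 \<le> \<bar>real_of_int n\<bar>" by linarith
  hence "2 * pi \<le> \<bar>real_of_int (2*n) * pi\<bar>" by (simp add: abs_mult)
  thus False using assms pi_gt3 by linarith
qed

lemma norm_ri: "norm (complex_of_real r * \<i>) = \<bar>r\<bar>"
  by (simp add: norm_mult)

lemma cosh_eq_cases:
  fixes z w :: complex
  assumes "norm z \<le> 2" "norm w \<le> 2" "cosh z = cosh w"
  shows "w = z \<or> w = -z"
proof -
  have "(exp z - exp w) * (1 - exp (-(z+w))) = exp z - exp w - exp(-(z+w)) * exp z + exp (-(z+w)) * exp w"
    by (simp add: algebra_simps)
  also have "\<dots> = exp z - exp w - exp (-w) + exp (-z)" by (simp add: exp_add[symmetric])
  also have "\<dots> = 2 * cosh z - 2 * cosh w" by (simp add: cosh_field_def add_divide_distrib)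
  finally have "(exp z - exp w) * (1 - exp (-(z+w))) = 2 * cosh z - 2 * cosh w" .
  hence "(exp z - exp w) * (1 - exp (-(z+w))) = 0" using assms(3) by simp
  hence "exp z = exp w \<or> exp (-(z+w)) = 1" by auto
  thus ?thesis
  proof
    assume "exp z = exp w"
    then obtain n::int where n: "z = w + (of_int (2 * n) * pi) * \<i>" by (auto simp: exp_eq)
    have "norm (z - w) \<le> 4" using assms norm_triangle_ineq4[of z w] by linarith
    moreover have "z - w = complex_of_real (of_int (2*n) * pi) * \<i>" using n by simp
    ultimately have "\<bar>real_of_int (2*n) * pi\<bar> \<le> 4" by (simp only: norm_ri)
    hence "n = 0" by (rule int_small)
    thus ?thesis using n by simp
  next
    assume "exp (-(z+w)) = 1"
    then obtain n::int where n: "Re (-(z+w)) = 0" "Im (-(z+w)) = of_int (2*n) * pi" by (auto simp: exp_eq_1)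
    have "norm (z + w) \<le> 4" using assms norm_triangle_ineq[of z w] by linarith
    hence "\<bar>Im (-(z+w))\<bar> \<le> 4" using abs_Im_le_cmod[of "z+w"] by simp
    hence "n = 0" using n by (intro int_small) simp
    hence "z + w = 0" using n by (simp add: complex_eq_iff)
    thus ?thesis by (simp add: add_eq_0_iff)
  qed
qed

lemma sinh_nz: fixes z :: complex assumes "norm z < 2" "z \<noteq> 0" shows "sinh z \<noteq> 0"
proof
  assume "sinh z = 0"
  hence "exp z = exp (-z)" by (simp add: sinh_field_def)
  then obtain n::int where n: "z = -z + (of_int (2 * n) * pi) * \<i>" by (auto simp: exp_eq)
  have "norm (z - (-z)) \<le> 4" using assms norm_triangle_ineq4[of z "-z"] by simp
  moreover have "z - (-z) = complex_of_real (of_int (2*n) * pi) * \<i>" using n by simp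
  ultimately have "\<bar>real_of_int (2*n) * pi\<bar> \<le> 4" by (simp only: norm_ri)
  hence "n = 0" by (rule int_small)
  thus False using n assms by simp
qed


lemma f0_dist: "dist (-2) (f0 z) = 10 * (cosh (Re z) - cos (Im z))"
proof -
  have A: "f0 z - (-2) = 10 * (cosh z - 1)" by (simp add: f0_def algebra_simps)
  have B: "dist (-2) (f0 z) = norm (f0 z - (-2))" by (metis dist_commute dist_norm)
  have "dist (-2) (f0 z) = norm (10 * (cosh z - 1))" by (subst B, subst A, rule refl)
  also have "\<dots> = 10 * norm (cosh z - 1)" by (simp only: norm_mult) simp
  finally show ?thesis by (simp add: norm_cosh_minus_1)
qed



lemma cover:
  fixes f :: "complex \<Rightarrow> complex"
  assumes cont: "continuous_on (cball 0 R) f" and op: "open (f ` ball 0 R)"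
    and c: "c \<in> f ` ball 0 R"
    and bd: "\<And>\<zeta>. norm \<zeta> = R \<Longrightarrow> \<rho> \<le> dist c (f \<zeta>)"
  shows "ball c \<rho> \<subseteq> f ` ball 0 R"
proof (rule ccontr)
  let ?V = "f ` ball 0 R"
  assume "\<not> ball c \<rho> \<subseteq> ?V"
  hence ne: "ball c \<rho> - ?V \<noteq> {}" by blast
  have "c \<in> ball c \<rho>"
  proof -
    obtain z where z: "z \<in> ball 0 R" "c = f z" using c by blast
    from ne obtain p where "p \<in> ball c \<rho>" by blast
    hence "0 < \<rho>" by (metis dist_not_less_zero mem_ball order_le_less_trans dist_self less_le_not_le le_less_linear)
    thus ?thesis by simp
  qed
  hence "ball c \<rho> \<inter> ?V \<noteq> {}" using c by blast
  then obtain q where q: "q \<in> ball c \<rho>" "q \<in> frontier ?V"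
    using connected_Int_frontier[OF connected_ball _ ne] by blast
  have "compact (f ` cball 0 R)" by (rule compact_continuous_image[OF cont]) simp
  hence cl: "closed (f ` cball 0 R)" by (rule compact_imp_closed)
  have "closure ?V \<subseteq> f ` cball 0 R"
    by (rule closure_minimal[OF _ cl]) (auto)
  moreover have "frontier ?V = closure ?V - ?V" using op by (simp add: frontier_def interior_open)
  ultimately have "q \<in> f ` cball 0 R - ?V" using q by blast
  then obtain \<zeta> where "\<zeta> \<in> cball 0 R" "\<zeta> \<notin> ball 0 R" "q = f \<zeta>" by blast
  hence "norm \<zeta> = R" by simp
  hence "\<rho> \<le> dist c q" using bd \<open>q = f \<zeta>\<close> by simp
  thus False using q by simp
qed

lemma f0_analytic: "f0 analytic_on A"
proof -
  have "(\<lambda>z. 10 * cosh z - 12 :: complex) analytic_on A" by (intro analytic_intros)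
  thus ?thesis by (simp add: f0_def[abs_def])
qed

lemma f0_holo: "f0 holomorphic_on A"
  by (rule analytic_imp_holomorphic[OF f0_analytic])

lemma f0_isCont: "continuous (at x) f0"
  unfolding f0_def[abs_def] by (intro continuous_intros)

lemma f0_cont: "continuous_on A f0"
  by (simp add: continuous_at_imp_continuous_on f0_isCont)

lemma f0_nonconst: assumes "0 < R" shows "\<not> f0 constant_on ball 0 R"
proof
  assume "f0 constant_on ball 0 R"
  then obtain c where c: "\<And>z. z \<in> ball 0 R \<Longrightarrow> f0 z = c" by (auto simp: constant_on_def)
  have "f0 0 = f0 (complex_of_real (R/2))" using c[of 0] c[of "complex_of_real (R/2)"] assms by simp
  moreover have "dist (-2) (f0 0) = 0" by (simp add: f0_def)
  moreover have "0 < dist (-2) (f0 (complex_of_real (R/2)))"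
  proof -
    have "1 + (R/2)^2/2 \<le> cosh (R/2)" by (rule cosh_lower)
    moreover have "0 < (R/2)^2" using assms by simp
    moreover have "dist (-2) (f0 (complex_of_real (R/2))) = 10 * (cosh (R/2) - 1)" by (simp add: f0_dist)
    ultimately have "0 < cosh (R/2) - 1" "dist (-2) (f0 (complex_of_real (R/2))) = 10 * (cosh (R/2) - 1)"
      by linarith+
    thus ?thesis by simp
  qed
  ultimately show False by simp
qed

lemma f0_open: assumes "0 < R" shows "open (f0 ` ball 0 R)"
  by (rule open_mapping_thm[OF f0_holo open_ball connected_ball open_ball order_refl f0_nonconst[OF assms]])

lemma boundary_bound:
  assumes "norm \<zeta> = R" "0 < R" "R \<le> 2"
  shows "10 * (R^2/2 - R^4/24) \<le> dist (-2) (f0 \<zeta>)"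
proof -
  let ?x = "Re \<zeta>" and ?y = "Im \<zeta>"
  have s: "?x^2 + ?y^2 = R^2" using assms(1) cmod_power2[of \<zeta>] by simp
  hence y2: "?y^2 \<le> R^2" using zero_le_power2[of ?x] by linarith
  have "R^2 \<le> 2^2" using assms by (intro power_mono) auto
  hence y4: "?y^2 \<le> 4" using y2 by simp
  have "(?y^2)^2 \<le> (R^2)^2" by (rule power_mono[OF y2]) simp
  hence y44: "?y^4 \<le> R^4" by (simp add: power_mult[symmetric])
  have "1 + ?x^2/2 \<le> cosh ?x" by (rule cosh_lower)
  moreover have "cos ?y \<le> 1 - ?y^2/2 + ?y^4/24" by (rule cos_upper[OF y4])
  ultimately have "R^2/2 - R^4/24 \<le> cosh ?x - cos ?y" using s y44 by linarith
  thus ?thesis by (simp add: f0_dist)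
qed

lemma cover_f0:
  assumes "0 < R" "R \<le> 2" "\<rho> \<le> 10 * (R^2/2 - R^4/24)"
  shows "ball (-2) \<rho> \<subseteq> f0 ` ball 0 R"
proof (rule cover[OF f0_cont f0_open[OF assms(1)]])
  show "-2 \<in> f0 ` ball 0 R" using assms by (intro image_eqI[of _ _ 0]) (simp_all add: f0_def)
  fix \<zeta> :: complex assume "norm \<zeta> = R"
  thus "\<rho> \<le> dist (-2) (f0 \<zeta>)" using boundary_bound[of \<zeta> R] assms by linarith
qed

lemma upper_f0: "f0 ` ball 0 1 \<subseteq> ball (-2) 7"
proof
  fix w assume "w \<in> f0 ` ball 0 1"
  then obtain z where z: "norm z < 1" "w = f0 z" by auto
  let ?x = "Re z" and ?y = "Im z"
  have "(norm z)^2 < 1" using z by (simp add: power_less_one_iff abs_less_iff)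
  hence s: "?x^2 + ?y^2 < 1" using cmod_power2[of z] by simp
  hence "?x^2 \<le> 1" using zero_le_power2[of ?y] by linarith
  hence "cosh ?x \<le> 1 + 2/3 * ?x^2" by (rule cosh_upper)
  moreover have "1 - ?y^2/2 \<le> cos ?y" by (rule cos_lower)
  moreover have "0 \<le> ?y^2" by simp
  ultimately have "cosh ?x - cos ?y < 7/10" using s by linarith
  thus "w \<in> ball (-2) 7" using z by (simp add: f0_dist)
qed

lemma deriv1: "deriv (\<lambda>\<xi>. f0 \<xi> - w) = (\<lambda>\<xi>. 10 * sinh \<xi>)"
proof
  fix \<xi> :: complex
  have "((\<lambda>\<xi>. f0 \<xi> - w) has_field_derivative 10 * sinh \<xi>) (at \<xi>)"
    unfolding f0_def by (auto intro!: derivative_eq_intros)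
  thus "deriv (\<lambda>\<xi>. f0 \<xi> - w) \<xi> = 10 * sinh \<xi>" by (rule DERIV_imp_deriv)
qed

lemma deriv2: "deriv (\<lambda>\<xi>. 10 * sinh \<xi>) = (\<lambda>\<xi>::complex. 10 * cosh \<xi>)"
proof
  fix \<xi> :: complex
  have "((\<lambda>\<xi>. 10 * sinh \<xi>) has_field_derivative 10 * cosh \<xi>) (at \<xi>)"
    by (auto intro!: derivative_eq_intros)
  thus "deriv (\<lambda>\<xi>. 10 * sinh \<xi>) \<xi> = 10 * cosh \<xi>" by (rule DERIV_imp_deriv)
qed

lemma zorder_f0:
  assumes "norm z < 2" "f0 z = w"
  shows "zorder (\<lambda>\<xi>. f0 \<xi> - w) z = (if z = 0 then 2 else 1)"
proof (cases "z = 0")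
  case True
  have "zorder (\<lambda>\<xi>. f0 \<xi> - w) z = int 2"
  proof (rule zorder_zero_eqI[of _ UNIV])
    show "(\<lambda>\<xi>. f0 \<xi> - w) holomorphic_on UNIV" by (intro holomorphic_intros f0_holo)
    fix i :: nat assume "i < nat (int 2)"
    hence "i = 0 \<or> i = 1" by auto
    thus "(deriv ^^ i) (\<lambda>\<xi>. f0 \<xi> - w) z = 0"
      using assms True by (auto simp: deriv1)
  next
    show "(deriv ^^ nat (int 2)) (\<lambda>\<xi>. f0 \<xi> - w) z \<noteq> 0"
      using True by (simp add: numeral_2_eq_2 deriv1 deriv2)
  qed auto
  thus ?thesis using True by simp
next
  case False
  have "zorder (\<lambda>\<xi>. f0 \<xi> - w) z = int 1"
  proof (rule zorder_zero_eqI[of _ UNIV])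
    show "(\<lambda>\<xi>. f0 \<xi> - w) holomorphic_on UNIV" by (intro holomorphic_intros f0_holo)
    fix i :: nat assume "i < nat (int 1)"
    hence "i = 0" by auto
    thus "(deriv ^^ i) (\<lambda>\<xi>. f0 \<xi> - w) z = 0"
      using assms by auto
  next
    show "(deriv ^^ nat (int 1)) (\<lambda>\<xi>. f0 \<xi> - w) z \<noteq> 0"
      using sinh_nz[OF assms(1) False] by (simp add: deriv1)
  qed auto
  thus ?thesis using False by simp
qed

lemma f0_eq_cases: assumes "norm z \<le> 2" "norm w \<le> 2" "f0 z = f0 w" shows "w = z \<or> w = -z"
  using assms by (intro cosh_eq_cases) (auto simp: f0_def)

lemma f0_minus: "f0 (-z) = f0 z" by (simp add: f0_def)

lemma degree_f0: "map_degree_on f0 (ball 0 2) 2"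
  unfolding map_degree_on_def
proof
  fix w assume "w \<in> f0 ` ball 0 2"
  then obtain z0 where z0: "norm z0 < 2" "w = f0 z0" by auto
  have S: "{z \<in> ball 0 2. f0 z = w} = {z0, -z0}"
  proof
    show "{z \<in> ball 0 2. f0 z = w} \<subseteq> {z0, -z0}"
    proof
      fix z assume "z \<in> {z \<in> ball 0 2. f0 z = w}"
      hence "norm z < 2" "f0 z0 = f0 z" using z0 by auto
      hence "z = z0 \<or> z = -z0" using z0 f0_eq_cases[of z0 z] by auto
      thus "z \<in> {z0, -z0}" by auto
    qed
    show "{z0, -z0} \<subseteq> {z \<in> ball 0 2. f0 z = w}" using z0 by (auto simp: f0_minus)
  qed
  have zo: "zorder (\<lambda>\<xi>. f0 \<xi> - w) z = (if z = 0 then 2 else 1)" if zin: "z \<in> {z0, -z0}" for z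
  proof -
    have "z \<in> {z \<in> ball 0 2. f0 z = w}" using zin S by simp
    hence "norm z < 2" "f0 z = w" by auto
    thus ?thesis by (rule zorder_f0)
  qed
  show "finite {z \<in> ball 0 2. f0 z = w} \<and>
        (\<Sum>z \<in> {z \<in> ball 0 2. f0 z = w}. zorder (\<lambda>\<xi>. f0 \<xi> - w) z) = int 2"
  proof (cases "z0 = 0")
    case True
    thus ?thesis unfolding S using zo by simp
  next
    case False
    hence "z0 \<noteq> -z0" by (auto simp: complex_eq_iff)
    hence "(\<Sum>z \<in> {z0, -z0}. zorder (\<lambda>\<xi>. f0 \<xi> - w) z) = zorder (\<lambda>\<xi>. f0 \<xi> - w) z0 + zorder (\<lambda>\<xi>. f0 \<xi> - w) (-z0)"
      by simp
    also have "\<dots> = 2" using zo[of z0] zo[of "-z0"] False by simp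
    finally show ?thesis unfolding S by simp
  qed
qed

lemma proper_f0: "proper_map (top_of_set (ball 0 2)) (top_of_set (f0 ` ball 0 2)) f0"
proof (rule compact_imp_proper_map)
  show "k_space (top_of_set (f0 ` ball 0 2))"
    by (intro metrizable_imp_k_space metrizable_space_subtopology metrizable_space_euclidean)
  show "kc_space (top_of_set (f0 ` ball 0 2))"
    by (intro Hausdorff_imp_kc_space Hausdorff_space_subtopology Hausdorff_space_euclidean)
  show "f0 \<in> topspace (top_of_set (ball 0 2)) \<rightarrow> topspace (top_of_set (f0 ` ball 0 2))" by auto
  show "continuous_map (top_of_set (ball 0 2)) (top_of_set (f0 ` ball 0 2)) f0 \<or> kc_space (top_of_set (ball 0 2))"
    by (intro disjI2 Hausdorff_imp_kc_space Hausdorff_space_subtopology Hausdorff_space_euclidean)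
  fix K assume "compactin (top_of_set (f0 ` ball 0 2)) K"
  hence K: "compact K" "K \<subseteq> f0 ` ball 0 2" by (auto simp: compactin_subtopology)
  have eq: "{x \<in> topspace (top_of_set (ball 0 2)). f0 x \<in> K} = cball 0 2 \<inter> f0 -` K"
  proof
    show "{x \<in> topspace (top_of_set (ball 0 2)). f0 x \<in> K} \<subseteq> cball 0 2 \<inter> f0 -` K" by auto
    show "cball 0 2 \<inter> f0 -` K \<subseteq> {x \<in> topspace (top_of_set (ball 0 2)). f0 x \<in> K}"
    proof
      fix x assume x: "x \<in> cball 0 2 \<inter> f0 -` K"
      hence "f0 x \<in> f0 ` ball 0 2" using K by blast
      then obtain z where z: "norm z < 2" "f0 x = f0 z" by auto
      have "z = x \<or> z = -x" using x z by (intro f0_eq_cases) auto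
      hence "norm x < 2" using z by auto
      thus "x \<in> {x \<in> topspace (top_of_set (ball 0 2)). f0 x \<in> K}" using x by auto
    qed
  qed
  have "compact (cball 0 2 \<inter> f0 -` K)"
    by (intro compact_Int_closed compact_cball continuous_closed_vimage compact_imp_closed K(1) f0_isCont)
  moreover have "cball 0 2 \<inter> f0 -` K \<subseteq> ball 0 2" using eq by auto
  ultimately show "compactin (top_of_set (ball 0 2)) {x \<in> topspace (top_of_set (ball 0 2)). f0 x \<in> K}"
    unfolding eq by (simp add: compactin_subtopology)
qed

theorem lemma4p2:
  shows "f0 holomorphic_on ball 0 2
    \<and> proper_map (top_of_set (ball 0 2)) (top_of_set (f0 ` ball 0 2)) f0
    \<and> map_degree_on f0 (ball 0 2) 2
    \<and> ball (-2) 4 \<subseteq> f0 ` ball 0 1 \<and> f0 ` ball 0 1 \<subseteq> ball (-2) 7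
    \<and> ball (-2) 9 \<subseteq> f0 ` ball 0 2"
proof (intro conjI)
  show "f0 holomorphic_on ball 0 2" by (rule f0_holo)
  show "proper_map (top_of_set (ball 0 2)) (top_of_set (f0 ` ball 0 2)) f0" by (rule proper_f0)
  show "map_degree_on f0 (ball 0 2) 2" by (rule degree_f0)
  show "ball (-2) 4 \<subseteq> f0 ` ball 0 1" by (rule cover_f0) (simp_all add: power4_eq_xxxx)
  show "f0 ` ball 0 1 \<subseteq> ball (-2) 7" by (rule upper_f0)
  show "ball (-2) 9 \<subseteq> f0 ` ball 0 2" by (rule cover_f0) (simp_all add: power4_eq_xxxx)
qed

end
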